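(* Let $p$ be an odd prime, $G=\mu_p$, $x\in G$ a generator and $\alpha$ an integer whose class generates $(\mathbb{Z}/p\mathbb{Z})^\times$. For each divisor $u$ of $p-1$, put $r+1=(p-1)/u$ (the multiplicative order of $\beta:=\alpha^u$ modulo $p$), $I=\{1\}$ and $$A_i=\{x^{\alpha^i},x^{\alpha^i\beta},\dots,x^{\alpha^i\beta^r}\},\qquad i=0,\dots,u-1.$$ Then $\mathcal{P}=\{I,A_0,\dots,A_{u-1}\}$ is a unital partition of $G$, and every unital partition of $G$ arises in this way for some $u\mid p-1$. Moreover, every unital partition of $\mu_p$ is a fusion partition.
   Context: A unital partition of a finite commutative group $G$ is a partition $G=I\sqcup A_0\sqcup\dots\sqcup A_s$ with $I=\{1\}$ such that, with $a_i=\sum_{x\in A_i}x\in\mathbb{Z}[G]$, the $\mathbb{Z}$-span of $1$ and the $a_i$ is closed under multiplication in $\mathbb{Z}[G]$. It is a fusion partition if in addition: (1) for every member $A_i$ there is a member $A_{i^*}$ with $A_{i^*}=\{x^{-1}\mid x\in A_i\}$; and (2) writing $a_ia_j=\sum_k n^k_{i,j}a_k$ (sum over all members of the partition, including $I$), one has $n^k_{i,j}|A_k|=n^{j^*}_{i,k^*}|A_{j^*}|$ for all $i,j,k$. *)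

theory Defs
  imports "HOL-Algebra.Algebra" "HOL-Number_Theory.Cong" Complex_Main
begin

text \<open>Group ring Z[G] of a finite group G: functions from carrier G to int (zero outside).
  Multiplication is convolution.\<close>

definition gr_mult :: "('a, 'b) monoid_scheme \<Rightarrow> ('a \<Rightarrow> int) \<Rightarrow> ('a \<Rightarrow> int) \<Rightarrow> ('a \<Rightarrow> int)" where
  "gr_mult G f g = (\<lambda>z. if z \<in> carrier G
      then (\<Sum>y\<in>carrier G. f y * g (inv\<^bsub>G\<^esub> y \<otimes>\<^bsub>G\<^esub> z)) else 0)"

text \<open>The element a = sum of x over x in A.\<close>
definition setsum_elt :: "'a set \<Rightarrow> ('a \<Rightarrow> int)" where
  "setsum_elt A = (\<lambda>z. if z \<in> A then 1 else 0)"

definition lincomb :: "'a set set \<Rightarrow> ('a set \<Rightarrow> int) \<Rightarrow> ('a \<Rightarrow> int)" where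
  "lincomb P c = (\<lambda>z. \<Sum>A\<in>P. c A * setsum_elt A z)"

definition zspan :: "'a set set \<Rightarrow> ('a \<Rightarrow> int) set" where
  "zspan P = {f. \<exists>c. f = lincomb P c}"

definition is_partition_with_unit :: "('a, 'b) monoid_scheme \<Rightarrow> 'a set set \<Rightarrow> bool" where
  "is_partition_with_unit G P \<longleftrightarrow>
     {\<one>\<^bsub>G\<^esub>} \<in> P \<and> (\<forall>A\<in>P. A \<noteq> {} \<and> A \<subseteq> carrier G) \<and>
     (\<forall>A\<in>P. \<forall>B\<in>P. A \<noteq> B \<longrightarrow> A \<inter> B = {}) \<and> \<Union>P = carrier G"

text \<open>Unital partition: the Z-span of 1 and the a_i is closed under multiplication in Z[G].
  (1 = the element of {1}, which is a member of P.)\<close>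
definition unital_partition :: "('a, 'b) monoid_scheme \<Rightarrow> 'a set set \<Rightarrow> bool" where
  "unital_partition G P \<longleftrightarrow> is_partition_with_unit G P \<and>
     (\<forall>f\<in>zspan P. \<forall>g\<in>zspan P. gr_mult G f g \<in> zspan P)"

definition struct_const :: "('a, 'b) monoid_scheme \<Rightarrow> 'a set set \<Rightarrow> 'a set \<Rightarrow> 'a set \<Rightarrow> 'a set \<Rightarrow> int" where
  "struct_const G P A B C =
     (THE n. \<exists>c. gr_mult G (setsum_elt A) (setsum_elt B) = lincomb P c \<and> c C = n)"

definition inv_set :: "('a, 'b) monoid_scheme \<Rightarrow> 'a set \<Rightarrow> 'a set" where
  "inv_set G A = (\<lambda>x. inv\<^bsub>G\<^esub> x) ` A"

definition fusion_partition :: "('a, 'b) monoid_scheme \<Rightarrow> 'a set set \<Rightarrow> bool" where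
  "fusion_partition G P \<longleftrightarrow> unital_partition G P \<and>
     (\<forall>A\<in>P. inv_set G A \<in> P) \<and>
     (\<forall>A\<in>P. \<forall>B\<in>P. \<forall>C\<in>P.
        struct_const G P A B C * int (card C)
        = struct_const G P A (inv_set G C) (inv_set G B) * int (card (inv_set G B)))"

definition mu :: "nat \<Rightarrow> complex monoid" where
  "mu p = \<lparr>carrier = {z. z ^ p = 1}, monoid.mult = (*), one = 1\<rparr>"

definition unit_group_generator :: "nat \<Rightarrow> int \<Rightarrow> bool" where
  "unit_group_generator p \<alpha> \<longleftrightarrow> coprime \<alpha> (int p) \<and>
     (\<forall>k::int. coprime k (int p) \<longrightarrow> (\<exists>i::nat. [\<alpha> ^ i = k] (mod int p)))"

definition Apart :: "nat \<Rightarrow> complex \<Rightarrow> int \<Rightarrow> nat \<Rightarrow> nat \<Rightarrow> complex set" where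
  "Apart p x \<alpha> u i = (let \<beta> = \<alpha> ^ u; r = (p - 1) div u - 1 in
      {x [^]\<^bsub>mu p\<^esub> (\<alpha> ^ i * \<beta> ^ j) | j. j \<le> r})"

definition Ppart :: "nat \<Rightarrow> complex \<Rightarrow> int \<Rightarrow> nat \<Rightarrow> complex set set" where
  "Ppart p x \<alpha> u = insert {1} {Apart p x \<alpha> u i | i. i < u}"

end

theory Submission
  imports Defs "HOL-Number_Theory.Number_Theory" "HOL-Computational_Algebra.Polynomial"
begin

lemma mu_simps [simp]: "carrier (mu p) = {z. z ^ p = 1}" "monoid.mult (mu p) = (*)" "one (mu p) = 1"
  by (simp_all add: mu_def)

lemma mu_nat_pow [simp]: "z [^]\<^bsub>mu p\<^esub> (n::nat) = z ^ n"
  by (induction n) (simp_all add: mu_def)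

lemma mu_group: assumes "p > 0" shows "comm_group (mu p)"
proof (rule comm_groupI)
  fix z w assume "z \<in> carrier (mu p)" "w \<in> carrier (mu p)"
  thus "z \<otimes>\<^bsub>mu p\<^esub> w \<in> carrier (mu p)" by (simp add: power_mult_distrib)
next
  fix z assume z: "z \<in> carrier (mu p)"
  have "z \<noteq> 0" using z assms by (auto simp: power_0_left)
  show "\<exists>y\<in>carrier (mu p). y \<otimes>\<^bsub>mu p\<^esub> z = \<one>\<^bsub>mu p\<^esub>"
    using z \<open>z \<noteq> 0\<close> by (intro bexI[of _ "inverse z"]) (auto simp: power_inverse)
qed (auto simp: mu_def)

lemma mu_inv: assumes "p > 0" "z \<in> carrier (mu p)" shows "inv\<^bsub>mu p\<^esub> z = inverse z"
proof -
  interpret comm_group "mu p" using mu_group assms by auto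
  have "z \<noteq> 0" using assms by (auto simp: power_0_left)
  show ?thesis
    by (rule inv_equality) (use assms \<open>z \<noteq> 0\<close> in \<open>auto simp: power_inverse\<close>)
qed

lemma root_exists: assumes "p \<ge> 2" shows "\<exists>z. z ^ p = (1::complex) \<and> z \<noteq> 1"
proof -
  define z where "z = cis (2 * pi / p)"
  have "z ^ p = cis (real p * (2 * pi / p))" by (simp add: z_def DeMoivre)
  also have "\<dots> = 1" using assms by simp
  finally have 1: "z ^ p = 1" .
  have "cos (2 * pi / p) < 1"
  proof -
    have "0 < 2 * pi / p" using assms by simp
    moreover have "2 * pi / p \<le> pi" using assms by (simp add: field_simps)
    ultimately show ?thesis
      using cos_monotone_0_pi[of 0 "2 * pi / p"] by (smt (verit) cos_zero cos_pi)
  qed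
  hence "z \<noteq> 1" by (auto simp: z_def cis.ctr complex_eq_iff)
  with 1 show ?thesis by blast
qed

lemma binom_frob:
  fixes a b :: "'a::comm_ring_1"
  assumes q: "Factorial_Ring.prime q"
  shows "\<exists>d. (a + b) ^ q = a ^ q + b ^ q + of_nat q * d"
proof -
  have q0: "q > 0" using q prime_gt_0_nat by blast
  have "(a + b) ^ q = (\<Sum>k\<le>q. of_nat (q choose k) * a ^ k * b ^ (q - k))"
    by (rule binomial_ring)
  also have "{..q} = insert 0 (insert q {0<..<q})" using q0 by auto
  also have "(\<Sum>k\<in>insert 0 (insert q {0<..<q}). of_nat (q choose k) * a ^ k * b ^ (q - k))
      = b ^ q + (a ^ q + (\<Sum>k\<in>{0<..<q}. of_nat (q choose k) * a ^ k * b ^ (q - k)))"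
    using q0 by (simp add: sum.insert)
  also have "(\<Sum>k\<in>{0<..<q}. of_nat (q choose k) * a ^ k * b ^ (q - k))
      = of_nat q * (\<Sum>k\<in>{0<..<q}. of_nat ((q choose k) div q) * a ^ k * b ^ (q - k))"
  proof -
    have "of_nat (q choose k) * a ^ k * b ^ (q - k) = of_nat q * (of_nat ((q choose k) div q) * a ^ k * b ^ (q - k))"
      if "k \<in> {0<..<q}" for k
    proof -
      have "q dvd (q choose k)" using dvd_choose_prime[of k q] that q q0 by auto
      then have "(q choose k) = q * ((q choose k) div q)" by simp
      then have "(of_nat (q choose k) :: 'a) = of_nat q * of_nat ((q choose k) div q)"
        by (metis of_nat_mult)
      then show ?thesis by (simp add: mult.assoc)
    qed
    then show ?thesis by (simp add: sum_distrib_left)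
  qed
  finally have "(a + b) ^ q = b ^ q + (a ^ q + of_nat q * (\<Sum>k\<in>{0<..<q}. of_nat ((q choose k) div q) * a ^ k * b ^ (q - k)))" .
  then show ?thesis by (intro exI[of _ "(\<Sum>k\<in>{0<..<q}. of_nat ((q choose k) div q) * a ^ k * b ^ (q - k))"]) (simp only: add_ac)
qed

lemma sum_frob:
  fixes f :: "'b \<Rightarrow> 'a::comm_ring_1"
  assumes q: "Factorial_Ring.prime q" and "finite T"
  shows "\<exists>c. (\<Sum>t\<in>T. f t) ^ q = (\<Sum>t\<in>T. f t ^ q) + of_nat q * c"
  using \<open>finite T\<close>
proof (induction T rule: finite_induct)
  case empty
  have "q > 0" using q prime_gt_0_nat by blast
  then show ?case by (intro exI[of _ 0]) (simp add: power_0_left)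
next
  case (insert t T)
  obtain c where c: "(\<Sum>t\<in>T. f t) ^ q = (\<Sum>t\<in>T. f t ^ q) + of_nat q * c" using insert by blast
  obtain d where d: "(f t + (\<Sum>t\<in>T. f t)) ^ q = f t ^ q + (\<Sum>t\<in>T. f t) ^ q + of_nat q * d"
    using binom_frob[OF q] by blast
  show ?case using insert c d
    by (intro exI[of _ "c + d"]) (simp add: algebra_simps)
qed

locale mup =
  fixes p :: nat and x :: complex
  assumes prime_p: "Factorial_Ring.prime p" and odd_p: "odd p" and x_root: "x ^ p = 1"
    and gen: "{z. z ^ p = 1} = range (\<lambda>n. x ^ n)"
begin

abbreviation "CC \<equiv> {z::complex. z ^ p = 1}"

lemma p_ge3: "p \<ge> 3"
  using prime_p odd_p prime_ge_2_nat[of p] by (cases "p = 2") auto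

lemma p_pos: "p > 0" using p_ge3 by auto

lemma grp: "comm_group (mu p)" using mu_group p_pos .

lemma x_ne1: "x \<noteq> 1"
proof
  assume "x = 1"
  have "2 \<le> p" using p_ge3 by simp
  then obtain z where "z ^ p = (1::complex)" "z \<noteq> 1" using root_exists by blast
  then have "z \<in> range (\<lambda>n. x ^ n)" using gen by auto
  with \<open>x = 1\<close> \<open>z \<noteq> 1\<close> show False by auto
qed

lemma x_pow_1_iff: "x ^ k = 1 \<longleftrightarrow> p dvd k"
proof -
  interpret comm_group "mu p" by (rule grp)
  have xc: "x \<in> carrier (mu p)" using x_root by simp
  have "ord x dvd p" using pow_eq_id[OF xc, of p] x_root by simp
  moreover have "ord x \<noteq> 1" using pow_eq_id[OF xc, of 1] x_ne1 by auto
  ultimately have "ord x = p" using prime_p prime_nat_iff by blast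
  then show ?thesis using pow_eq_id[OF xc, of k] by simp
qed

lemma pow_mod_p: "(z::complex) ^ p = 1 \<Longrightarrow> z ^ n = z ^ (n mod p)"
proof -
  assume "z ^ p = 1"
  have "z ^ n = z ^ (p * (n div p) + n mod p)" by (simp only: mult_div_mod_eq)
  also have "\<dots> = (z ^ p) ^ (n div p) * z ^ (n mod p)" unfolding power_add power_mult ..
  finally have "z ^ n = (z ^ p) ^ (n div p) * z ^ (n mod p)" .
  then show ?thesis using \<open>z ^ p = 1\<close> by simp
qed

lemma x_pow_eq_iff: "x ^ m = x ^ n \<longleftrightarrow> m mod p = n mod p"
proof -
  have x0: "x \<noteq> 0" using x_root p_pos by (auto simp: power_0_left)
  { fix m n :: nat assume "m \<le> n"
    have "x ^ n = x ^ m * x ^ (n - m)" using \<open>m \<le> n\<close> by (simp flip: power_add)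
    hence "x ^ m = x ^ n \<longleftrightarrow> x ^ (n - m) = 1" using x0 by auto
    also have "\<dots> \<longleftrightarrow> p dvd (n - m)" by (rule x_pow_1_iff)
    also have "\<dots> \<longleftrightarrow> m mod p = n mod p" using \<open>m \<le> n\<close>
      by (metis mod_eq_dvd_iff_nat)
    finally have "x ^ m = x ^ n \<longleftrightarrow> m mod p = n mod p" . }
  from this[of m n] this[of n m] show ?thesis by (cases "m \<le> n") auto
qed

lemma CC_eq: "CC = (\<lambda>n. x ^ n) ` {..<p}"
proof -
  have "x ^ n \<in> (\<lambda>n. x ^ n) ` {..<p}" for n
    using pow_mod_p[OF x_root, of n] p_pos by auto
  then show ?thesis using gen by auto
qed

lemma finite_CC: "finite CC" using CC_eq by simp

lemma card_CC: "card CC = p"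
proof -
  have "inj_on (\<lambda>n. x ^ n) {..<p}"
    by (auto simp: inj_on_def x_pow_eq_iff)
  then show ?thesis using CC_eq by (simp add: card_image)
qed

lemma int_pow_x: "x [^]\<^bsub>mu p\<^esub> (k::int) = x ^ nat (k mod int p)"
proof -
  interpret comm_group "mu p" by (rule grp)
  have xc: "x \<in> carrier (mu p)" using x_root by simp
  have "ord x = p"
  proof -
    have "ord x dvd p" using pow_eq_id[OF xc, of p] x_root by simp
    moreover have "ord x \<noteq> 1" using pow_eq_id[OF xc, of 1] x_ne1 by auto
    ultimately show ?thesis using prime_p prime_nat_iff by blast
  qed
  have "x [^]\<^bsub>mu p\<^esub> k = x [^]\<^bsub>mu p\<^esub> (int (nat (k mod int p)))"
    unfolding int_pow_eq[OF xc] \<open>ord x = p\<close> using p_pos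
    by (simp add: mod_eq_dvd_iff[symmetric])
  also have "\<dots> = x ^ nat (k mod int p)" by (simp only: int_pow_int mu_nat_pow)
  finally show ?thesis .
qed

lemma grm: "gr_mult (mu p) f g z = (if z ^ p = 1 then \<Sum>y\<in>CC. f y * g (z / y) else 0)"
proof -
  have "inv\<^bsub>mu p\<^esub> y \<otimes>\<^bsub>mu p\<^esub> z = z / y" if "y \<in> CC" for y
    using mu_inv[OF p_pos, of y] that by (simp add: divide_inverse mult.commute)
  then show ?thesis unfolding gr_mult_def by (auto intro!: sum.cong)
qed


section \<open>Polynomials to the group ring\<close>

definition phi :: "int poly \<Rightarrow> complex \<Rightarrow> int" where
  "phi P z = (\<Sum>n\<le>degree P. coeff P n * (if z = x ^ n then 1 else 0))"

lemma phiN: "degree P \<le> N \<Longrightarrow> phi P z = (\<Sum>n\<le>N. coeff P n * (if z = x ^ n then 1 else 0))"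
  unfolding phi_def by (intro sum.mono_neutral_left) (auto simp: coeff_eq_0)

lemma phi_add: "phi (P + Q) z = phi P z + phi Q z"
proof -
  define N where "N = max (degree P) (degree Q)"
  have "degree (P + Q) \<le> N" "degree P \<le> N" "degree Q \<le> N"
    unfolding N_def using degree_add_le_max[of P Q] by auto
  then show ?thesis by (simp add: phiN[of _ N] algebra_simps sum.distrib)
qed

lemma phi_zero: "phi 0 z = 0" by (simp add: phi_def)

lemma phi_sum: "finite T \<Longrightarrow> phi (\<Sum>t\<in>T. F t) z = (\<Sum>t\<in>T. phi (F t) z)"
  by (induction T rule: finite_induct) (simp_all add: phi_zero phi_add)

lemma phi_monom: "phi (monom c n) z = c * (if z = x ^ n then 1 else 0)"
proof -
  have "degree (monom c n) \<le> n" by (simp add: degree_monom_le)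
  then have "phi (monom c n) z = (\<Sum>k\<le>n. coeff (monom c n) k * (if z = x ^ k then 1 else 0))"
    by (rule phiN)
  also have "\<dots> = (\<Sum>k\<le>n. if k = n then c * (if z = x ^ n then 1 else 0) else 0)"
    by (intro sum.cong) auto
  also have "\<dots> = c * (if z = x ^ n then 1 else 0)"
    by simp
  finally show ?thesis .
qed

lemma phi_scale: "phi (of_nat q * Q) z = int q * phi Q z"
proof -
  have "coeff (of_nat q * Q) n = int q * coeff Q n" for n by (simp add: of_nat_poly)
  moreover have "degree (of_nat q * Q) \<le> degree Q"
    using degree_mult_le[of "of_nat q" Q] by simp
  ultimately have "phi (of_nat q * Q) z = (\<Sum>n\<le>degree Q. int q * coeff Q n * (if z = x ^ n then 1 else 0))"
    using phiN[of "of_nat q * Q" "degree Q"] by simp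
  then show ?thesis unfolding phi_def[of Q] by (simp add: sum_distrib_left mult.assoc)
qed

lemma x_pow_in: "(x ^ n) ^ p = 1"
  by (metis x_root power_mult power_mult_distrib mult.commute power_one)

lemma x_ne0: "x \<noteq> 0" using x_root p_pos by (auto simp: power_0_left)

lemma phi_out: "z ^ p \<noteq> 1 \<Longrightarrow> phi P z = 0"
  unfolding phi_def using x_pow_in by (intro sum.neutral) auto

lemma phi_mult: "phi (P * Q) = gr_mult (mu p) (phi P) (phi Q)"
proof
  fix z
  show "phi (P * Q) z = gr_mult (mu p) (phi P) (phi Q) z"
  proof (cases "z ^ p = 1")
    case False
    then show ?thesis by (simp add: grm phi_out)
  next
    case True
    define dP where "dP = degree P"
    define dQ where "dQ = degree Q"
    define N where "N = dP + dQ"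
    define h where "h i j = coeff P i * coeff Q j * (if z = x ^ (i + j) then 1 else 0 :: int)" for i j
    have "gr_mult (mu p) (phi P) (phi Q) z = (\<Sum>y\<in>CC. phi P y * phi Q (z / y))"
      using True by (simp add: grm)
    also have "\<dots> = (\<Sum>y\<in>CC. \<Sum>i\<le>dP. \<Sum>j\<le>dQ. coeff P i * coeff Q j *
         ((if y = x ^ i then 1 else 0) * (if z / y = x ^ j then 1 else 0)))"
      unfolding phi_def dP_def dQ_def by (simp add: sum_product algebra_simps)
    also have "\<dots> = (\<Sum>i\<le>dP. \<Sum>j\<le>dQ. \<Sum>y\<in>CC. coeff P i * coeff Q j *
         ((if y = x ^ i then 1 else 0) * (if z / y = x ^ j then 1 else 0)))"
      by (simp add: sum.swap[of _ CC] sum.swap[of _ CC "{..dQ}"])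
    also have "\<dots> = (\<Sum>i\<le>dP. \<Sum>j\<le>dQ. h i j)"
    proof (intro sum.cong refl)
      fix i j
      have "(\<Sum>y\<in>CC. coeff P i * coeff Q j * ((if y = x ^ i then 1 else 0) * (if z / y = x ^ j then 1 else 0)))
          = (\<Sum>y\<in>CC. if y = x ^ i then coeff P i * coeff Q j * (if z / x ^ i = x ^ j then 1 else 0) else 0)"
        by (intro sum.cong) auto
      also have "\<dots> = coeff P i * coeff Q j * (if z / x ^ i = x ^ j then 1 else 0)"
        using finite_CC x_pow_in[of i] by (simp add: sum.delta')
      also have "(z / x ^ i = x ^ j) \<longleftrightarrow> (z = x ^ (i + j))"
        using x_ne0 by (auto simp: power_add field_simps)
      finally show "(\<Sum>y\<in>CC. coeff P i * coeff Q j * ((if y = x ^ i then 1 else 0) * (if z / y = x ^ j then 1 else 0))) = h i j"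
        by (simp add: h_def)
    qed
    also have "\<dots> = (\<Sum>(i,j)\<in>{..dP} \<times> {..dQ}. h i j)"
      by (simp add: sum.cartesian_product)
    also have "\<dots> = (\<Sum>(i,j)\<in>{(i,j). i + j \<le> N}. h i j)"
    proof (rule sum.mono_neutral_left)
      have "{(i,j). i + j \<le> N} \<subseteq> {..N} \<times> {..N}" by auto
      then show "finite {(i,j). i + j \<le> N}" using finite_subset by blast
      show "{..dP} \<times> {..dQ} \<subseteq> {(i,j). i + j \<le> N}" unfolding N_def by auto
      show "\<forall>ij\<in>{(i,j). i + j \<le> N} - {..dP} \<times> {..dQ}. (case ij of (i,j) \<Rightarrow> h i j) = 0"
        unfolding h_def dP_def dQ_def by (auto simp: coeff_eq_0)
    qed
    also have "\<dots> = (\<Sum>k\<le>N. \<Sum>i\<le>k. h i (k - i))"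
      by (rule sum.triangle_reindex_eq)
    also have "\<dots> = (\<Sum>k\<le>N. coeff (P * Q) k * (if z = x ^ k then 1 else 0))"
      unfolding coeff_mult h_def by (intro sum.cong refl) (auto simp: sum_distrib_right)
    also have "\<dots> = phi (P * Q) z"
      using degree_mult_le[of P Q] unfolding N_def dP_def dQ_def by (simp add: phiN)
    finally show ?thesis by simp
  qed
qed

section \<open>Power maps\<close>

lemma pow_in: "z ^ p = (1::complex) \<Longrightarrow> (z ^ m) ^ p = 1"
  by (metis power_mult mult.commute power_one)

lemma fermat_mod: "\<not> p dvd m \<Longrightarrow> m ^ (p - 1) mod p = 1"
proof -
  assume "\<not> p dvd m"
  then have "[m ^ (p - 1) = 1] (mod p)" using fermat_theorem prime_p by blast
  then show ?thesis using p_ge3 by (simp add: cong_def)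
qed

lemma pow_cancel:
  assumes "\<not> p dvd m" "(z::complex) ^ p = 1"
  shows "(z ^ m) ^ (m ^ (p - 2)) = z" "(z ^ (m ^ (p - 2))) ^ m = z"
proof -
  have e: "m * m ^ (p - 2) = m ^ (p - 1)"
  proof -
    have "p - 1 = Suc (p - 2)" using p_ge3 by simp
    then show ?thesis by (simp only: power_Suc)
  qed
  have "z ^ (m ^ (p - 1)) = z ^ (m ^ (p - 1) mod p)" by (rule pow_mod_p[OF assms(2)])
  also have "\<dots> = z" using fermat_mod[OF assms(1)] by simp
  finally have "z ^ (m ^ (p - 1)) = z" .
  then show "(z ^ m) ^ (m ^ (p - 2)) = z" "(z ^ (m ^ (p - 2))) ^ m = z"
    using e by (simp_all flip: power_mult add: mult.commute)
qed

lemma not_dvd_pow: "\<not> p dvd m \<Longrightarrow> \<not> p dvd m ^ k"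
  using prime_p prime_dvd_power by blast

lemma pow_inj: "\<not> p dvd m \<Longrightarrow> inj_on (\<lambda>z. z ^ m) CC"
proof (rule inj_onI)
  fix z w assume "\<not> p dvd m" "z \<in> CC" "w \<in> CC" "z ^ m = w ^ m"
  then have "(z ^ m) ^ (m ^ (p - 2)) = (w ^ m) ^ (m ^ (p - 2))" by simp
  then show "z = w" using pow_cancel(1)[of m z] pow_cancel(1)[of m w] \<open>\<not> p dvd m\<close> \<open>z \<in> CC\<close> \<open>w \<in> CC\<close>
    by simp
qed

lemma pow_bij: "\<not> p dvd m \<Longrightarrow> bij_betw (\<lambda>z. z ^ m) CC CC"
proof -
  assume m: "\<not> p dvd m"
  have "(\<lambda>z. z ^ m) ` CC = CC"
  proof
    show "(\<lambda>z. z ^ m) ` CC \<subseteq> CC" using pow_in by auto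
    show "CC \<subseteq> (\<lambda>z. z ^ m) ` CC"
    proof
      fix z assume z: "z \<in> CC"
      then have "z = (z ^ (m ^ (p - 2))) ^ m" using pow_cancel(2)[OF m] by simp
      moreover have "z ^ (m ^ (p - 2)) \<in> CC" using z pow_in by simp
      ultimately show "z \<in> (\<lambda>z. z ^ m) ` CC" by blast
    qed
  qed
  then show ?thesis using pow_inj[OF m] by (simp add: bij_betw_def)
qed

lemma x_exp: "z \<in> CC \<Longrightarrow> z = x ^ (SOME n. z = x ^ n)"
proof -
  assume "z \<in> CC"
  then have "\<exists>n. z = x ^ n" using gen by auto
  then show ?thesis by (rule someI_ex)
qed

section \<open>Partitions\<close>

context
  fixes P assumes part: "is_partition_with_unit (mu p) P"
begin

lemma part_one: "{1} \<in> P" using part by (simp add: is_partition_with_unit_def)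
lemma part_sub: "A \<in> P \<Longrightarrow> A \<subseteq> CC" using part by (auto simp: is_partition_with_unit_def)
lemma part_ne: "A \<in> P \<Longrightarrow> A \<noteq> {}" using part by (auto simp: is_partition_with_unit_def)
lemma part_unique: "A \<in> P \<Longrightarrow> B \<in> P \<Longrightarrow> z \<in> A \<Longrightarrow> z \<in> B \<Longrightarrow> A = B"
  using part unfolding is_partition_with_unit_def by blast
lemma part_cover: "z \<in> CC \<Longrightarrow> \<exists>A\<in>P. z \<in> A"
  using part unfolding is_partition_with_unit_def by auto
lemma part_union: "\<Union>P = CC" using part unfolding is_partition_with_unit_def by auto
lemma part_fin: "finite P"
proof -
  have "P \<subseteq> Pow CC" using part_sub by auto
  thus ?thesis using finite_CC finite_subset by blast
qed
lemma part_elem_fin: "A \<in> P \<Longrightarrow> finite A" using part_sub finite_CC finite_subset by blast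

lemma lincomb_at: "A \<in> P \<Longrightarrow> z \<in> A \<Longrightarrow> lincomb P c z = c A"
proof -
  assume A: "A \<in> P" "z \<in> A"
  have "lincomb P c z = (\<Sum>B\<in>P. c B * setsum_elt B z)" by (simp add: lincomb_def)
  also have "\<dots> = (\<Sum>B\<in>P. if B = A then c A else 0)"
    using A part_unique by (intro sum.cong) (auto simp: setsum_elt_def)
  also have "\<dots> = c A" using A part_fin by simp
  finally show ?thesis .
qed

lemma lincomb_out: "z \<notin> CC \<Longrightarrow> lincomb P c z = 0"
proof -
  assume "z \<notin> CC"
  then have "\<forall>B\<in>P. z \<notin> B" using part_sub by blast
  then show ?thesis unfolding lincomb_def setsum_elt_def by (intro sum.neutral) auto
qed

lemma span_iff: "f \<in> zspan P \<longleftrightarrow> (\<forall>z. z \<notin> CC \<longrightarrow> f z = 0) \<and> (\<forall>A\<in>P. \<forall>z\<in>A. \<forall>w\<in>A. f z = f w)"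
proof
  assume "f \<in> zspan P"
  then obtain c where f: "f = lincomb P c" by (auto simp: zspan_def)
  have 1: "\<forall>z. z \<notin> CC \<longrightarrow> f z = 0" using f lincomb_out by simp
  have 2: "\<forall>A\<in>P. \<forall>z\<in>A. \<forall>w\<in>A. f z = f w"
  proof (intro ballI)
    fix A z w assume "A \<in> P" "z \<in> A" "w \<in> A"
    then show "f z = f w" using f lincomb_at[of A z c] lincomb_at[of A w c] by simp
  qed
  show "(\<forall>z. z \<notin> CC \<longrightarrow> f z = 0) \<and> (\<forall>A\<in>P. \<forall>z\<in>A. \<forall>w\<in>A. f z = f w)"
    using 1 2 by blast
next
  assume H: "(\<forall>z. z \<notin> CC \<longrightarrow> f z = 0) \<and> (\<forall>A\<in>P. \<forall>z\<in>A. \<forall>w\<in>A. f z = f w)"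
  define c where "c A = f (SOME z. z \<in> A)" for A
  have "f = lincomb P c"
  proof
    fix z show "f z = lincomb P c z"
    proof (cases "z \<in> CC")
      case True
      then obtain A where A: "A \<in> P" "z \<in> A" using part_cover by blast
      have s: "(SOME z. z \<in> A) \<in> A" using A(2) by (rule someI)
      have "lincomb P c z = c A" by (rule lincomb_at[OF A])
      also have "\<dots> = f z" unfolding c_def using H A s by blast
      finally show ?thesis by simp
    next
      case False then show ?thesis using H lincomb_out by simp
    qed
  qed
  then show "f \<in> zspan P" by (auto simp: zspan_def)
qed

lemma ind_in_span: "A \<in> P \<Longrightarrow> setsum_elt A \<in> zspan P"
proof -
  assume A: "A \<in> P"
  show ?thesis unfolding span_iff
  proof (intro conjI allI impI ballI)
    fix z assume "z \<notin> CC" then show "setsum_elt A z = 0" using part_sub[OF A] by (auto simp: setsum_elt_def)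
  next
    fix B z w assume "B \<in> P" "z \<in> B" "w \<in> B"
    then have "z \<in> A \<longleftrightarrow> w \<in> A" using part_unique[OF A \<open>B \<in> P\<close>] by blast
    then show "setsum_elt A z = setsum_elt A w" by (simp add: setsum_elt_def)
  qed
qed

lemma ind_in_span_iff: "S \<subseteq> CC \<Longrightarrow> setsum_elt S \<in> zspan P \<longleftrightarrow> (\<forall>A\<in>P. \<forall>z\<in>A. z \<in> S \<longrightarrow> A \<subseteq> S)"
proof -
  assume S: "S \<subseteq> CC"
  have 1: "(\<forall>z. z \<notin> CC \<longrightarrow> setsum_elt S z = 0)" using S by (auto simp: setsum_elt_def)
  have 2: "(\<forall>A\<in>P. \<forall>z\<in>A. \<forall>w\<in>A. setsum_elt S z = setsum_elt S w) \<longleftrightarrow>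
     (\<forall>A\<in>P. \<forall>z\<in>A. z \<in> S \<longrightarrow> A \<subseteq> S)"
  proof
    assume H: "\<forall>A\<in>P. \<forall>z\<in>A. \<forall>w\<in>A. setsum_elt S z = setsum_elt S w"
    show "\<forall>A\<in>P. \<forall>z\<in>A. z \<in> S \<longrightarrow> A \<subseteq> S"
    proof (intro ballI impI subsetI)
      fix A z w assume "A \<in> P" "z \<in> A" "z \<in> S" "w \<in> A"
      then have "setsum_elt S z = setsum_elt S w" using H by blast
      then show "w \<in> S" using \<open>z \<in> S\<close> by (auto simp: setsum_elt_def split: if_splits)
    qed
  next
    assume H: "\<forall>A\<in>P. \<forall>z\<in>A. z \<in> S \<longrightarrow> A \<subseteq> S"
    show "\<forall>A\<in>P. \<forall>z\<in>A. \<forall>w\<in>A. setsum_elt S z = setsum_elt S w"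
    proof (intro ballI)
      fix A z w assume "A \<in> P" "z \<in> A" "w \<in> A"
      then have "z \<in> S \<longleftrightarrow> w \<in> S" using H by blast
      then show "setsum_elt S z = setsum_elt S w" by (simp add: setsum_elt_def)
    qed
  qed
  show ?thesis unfolding span_iff using 1 2 by simp
qed

end


context
  fixes P assumes unital: "unital_partition (mu p) P"
begin

lemma upart: "is_partition_with_unit (mu p) P" using unital by (simp add: unital_partition_def)

lemma closed: "f \<in> zspan P \<Longrightarrow> g \<in> zspan P \<Longrightarrow> gr_mult (mu p) f g \<in> zspan P"
  using unital by (simp add: unital_partition_def)

lemma phi_pow_span: "phi A \<in> zspan P \<Longrightarrow> phi (A ^ n) \<in> zspan P"
proof (induction n)
  case 0
  have "phi 1 = setsum_elt {1}"
    using phi_monom[of 1 0] by (auto simp: setsum_elt_def monom_eq_1 fun_eq_iff)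
  then show ?case using ind_in_span[OF upart part_one[OF upart]] by simp
next
  case (Suc n)
  then show ?case by (simp add: phi_mult closed)
qed

lemma frob_span:
  assumes q: "Factorial_Ring.prime q" "\<not> p dvd q" and S: "S \<subseteq> CC" "setsum_elt S \<in> zspan P"
  shows "setsum_elt ((\<lambda>z. z ^ q) ` S) \<in> zspan P"
proof -
  define e where "e t = (SOME n. t = x ^ n)" for t
  have e: "t \<in> S \<Longrightarrow> x ^ e t = t" for t using x_exp S(1) unfolding e_def by auto
  have finS: "finite S" using S(1) finite_CC finite_subset by blast
  define A where "A = (\<Sum>t\<in>S. monom (1::int) (e t))"
  have phiA: "phi A = setsum_elt S"
  proof
    fix z
    have "phi A z = (\<Sum>t\<in>S. if z = t then 1 else 0)"
      unfolding A_def using finS e by (simp add: phi_sum phi_monom)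
    also have "\<dots> = setsum_elt S z" using finS by (simp add: setsum_elt_def)
    finally show "phi A z = setsum_elt S z" .
  qed
  obtain c where c: "A ^ q = (\<Sum>t\<in>S. monom 1 (e t) ^ q) + of_nat q * c"
    unfolding A_def using sum_frob[OF q(1) finS] by blast
  define Sq where "Sq = (\<lambda>z. z ^ q) ` S"
  have inj: "inj_on (\<lambda>z. z ^ q) S" using pow_inj[OF q(2)] S(1) inj_on_subset by blast
  have F: "phi (A ^ q) z = setsum_elt Sq z + int q * phi c z" for z
  proof -
    have "phi (\<Sum>t\<in>S. monom 1 (e t) ^ q) z = (\<Sum>t\<in>S. if z = t ^ q then 1 else 0)"
      using finS e by (simp add: phi_sum monom_power phi_monom power_mult)
    also have "\<dots> = (\<Sum>w\<in>Sq. if z = w then 1 else 0)"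
      unfolding Sq_def using sum.reindex[OF inj, of "\<lambda>w. if z = w then 1 else (0::int)"] by (simp add: comp_def)
    also have "\<dots> = setsum_elt Sq z"
      using finS unfolding Sq_def by (simp add: setsum_elt_def)
    finally show ?thesis using c by (simp add: phi_add phi_scale)
  qed
  have Fspan: "phi (A ^ q) \<in> zspan P" using phi_pow_span phiA S(2) by simp
  have SqC: "Sq \<subseteq> CC" unfolding Sq_def using S(1) pow_in by auto
  have q1: "int q > 1" using q(1) prime_gt_1_nat by auto
  show ?thesis
    unfolding Sq_def[symmetric] ind_in_span_iff[OF upart SqC]
  proof (intro ballI impI subsetI)
    fix B z w assume B: "B \<in> P" "z \<in> B" "z \<in> Sq" "w \<in> B"
    have "phi (A ^ q) z = phi (A ^ q) w" using Fspan B unfolding span_iff[OF upart] by blast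
    then have eq: "1 + int q * phi c z = setsum_elt Sq w + int q * phi c w"
      using F[of z] F[of w] B(3) by (simp add: setsum_elt_def)
    show "w \<in> Sq"
    proof (rule ccontr)
      assume "w \<notin> Sq"
      then have "1 = int q * (phi c w - phi c z)" using eq by (simp add: setsum_elt_def algebra_simps)
      then have "int q dvd 1" by (metis dvd_triv_left)
      then show False using q1 by auto
    qed
  qed
qed


lemma mult_span:
  "m > 0 \<Longrightarrow> \<not> p dvd m \<Longrightarrow> S \<subseteq> CC \<Longrightarrow> setsum_elt S \<in> zspan P
   \<Longrightarrow> setsum_elt ((\<lambda>z. z ^ m) ` S) \<in> zspan P"
proof (induction m rule: less_induct)
  case (less m)
  show ?case
  proof (cases "m = 1")
    case True then show ?thesis using less.prems by simp
  next
    case False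
    then obtain q where q: "Factorial_Ring.prime q" "q dvd m" using prime_factor_nat by blast
    then obtain m' where m': "m = q * m'" by blast
    have q1: "q > 1" using q(1) prime_gt_1_nat by auto
    have "m' > 0" using less.prems(1) m' by (cases "m' = 0") auto
    have "m' < m" using m' q1 \<open>m' > 0\<close> by simp
    have "\<not> p dvd m'" using less.prems(2) m' by auto
    have "\<not> p dvd q" using less.prems(2) q(2) dvd_trans by blast
    have IH: "setsum_elt ((\<lambda>z. z ^ m') ` S) \<in> zspan P"
      using less.IH[OF \<open>m' < m\<close> \<open>m' > 0\<close> \<open>\<not> p dvd m'\<close> less.prems(3,4)] .
    have sub: "(\<lambda>z. z ^ m') ` S \<subseteq> CC" using less.prems(3) pow_in by auto
    have "setsum_elt ((\<lambda>z. z ^ q) ` (\<lambda>z. z ^ m') ` S) \<in> zspan P"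
      by (rule frob_span[OF q(1) \<open>\<not> p dvd q\<close> sub IH])
    moreover have "(\<lambda>z. z ^ q) ` (\<lambda>z. z ^ m') ` S = (\<lambda>z. z ^ m) ` S"
      unfolding image_image m' by (simp add: power_mult mult.commute)
    ultimately show ?thesis by simp
  qed
qed

lemma block_pow:
  assumes T: "T \<in> P" and m: "\<not> p dvd m" "m > 0"
  shows "(\<lambda>z. z ^ m) ` T \<in> P"
proof -
  define Tm where "Tm = (\<lambda>z. z ^ m) ` T"
  have TC: "T \<subseteq> CC" using part_sub[OF upart T] .
  have TmC: "Tm \<subseteq> CC" unfolding Tm_def using TC pow_in by auto
  have "Tm \<noteq> {}" unfolding Tm_def using part_ne[OF upart T] by simp
  then obtain z where z: "z \<in> Tm" by blast
  obtain U where U: "U \<in> P" "z \<in> U" using part_cover[OF upart] TmC z by blast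
  have Tmspan: "setsum_elt Tm \<in> zspan P"
    unfolding Tm_def using mult_span[OF m(2) m(1) TC ind_in_span[OF upart T]] .
  have UTm: "U \<subseteq> Tm" using Tmspan U z unfolding ind_in_span_iff[OF upart TmC] by blast
  define m' where "m' = m ^ (p - 2)"
  have m'0: "m' > 0" unfolding m'_def using m(2) by simp
  have m'p: "\<not> p dvd m'" unfolding m'_def using not_dvd_pow[OF m(1)] .
  define Um where "Um = (\<lambda>z. z ^ m') ` U"
  have UC: "U \<subseteq> CC" using part_sub[OF upart U(1)] .
  have UmC: "Um \<subseteq> CC" unfolding Um_def using UC pow_in by auto
  have UmT: "Um \<subseteq> T"
  proof
    fix w assume "w \<in> Um"
    then obtain y where y: "y \<in> U" "w = y ^ m'" unfolding Um_def by blast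
    then obtain t where t: "t \<in> T" "y = t ^ m" using UTm unfolding Tm_def by blast
    have "w = t" using y t pow_cancel(1)[OF m(1), of t] TC unfolding m'_def by auto
    then show "w \<in> T" using t by simp
  qed
  have Umspan: "setsum_elt Um \<in> zspan P"
    unfolding Um_def using mult_span[OF m'0 m'p UC ind_in_span[OF upart U(1)]] .
  have "Um \<noteq> {}" unfolding Um_def using U by auto
  then obtain w where w: "w \<in> Um" by blast
  have "T \<subseteq> Um" using Umspan T w UmT unfolding ind_in_span_iff[OF upart UmC] by blast
  with UmT have TUm: "T = Um" by blast
  have "Tm = (\<lambda>z. z ^ m) ` Um" unfolding Tm_def TUm ..
  also have "\<dots> = (\<lambda>y. (y ^ m') ^ m) ` U" unfolding Um_def image_image ..
  also have "\<dots> = U"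
  proof -
    have "\<And>y. y \<in> U \<Longrightarrow> (y ^ m') ^ m = y" using pow_cancel(2)[OF m(1)] UC unfolding m'_def by auto
    then show ?thesis by simp
  qed
  finally show ?thesis using U(1) unfolding Tm_def by simp
qed


lemma inv_set_eq: "A \<subseteq> CC \<Longrightarrow> inv_set (mu p) A = inverse ` A"
  unfolding inv_set_def using mu_inv[OF p_pos] by (intro image_cong) auto

lemma inv_pow: "(z::complex) ^ p = 1 \<Longrightarrow> inverse z = z ^ (p - 1)"
proof -
  assume z: "z ^ p = 1"
  have "p = Suc (p - 1)" using p_pos by simp
  then have "z * z ^ (p - 1) = 1" using z by (metis power_Suc)
  then show ?thesis by (metis inverse_unique)
qed

lemma inv_block: "A \<in> P \<Longrightarrow> inv_set (mu p) A \<in> P"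
proof -
  assume A: "A \<in> P"
  have AC: "A \<subseteq> CC" using part_sub[OF upart A] .
  have "inv_set (mu p) A = (\<lambda>z. z ^ (p - 1)) ` A"
    unfolding inv_set_eq[OF AC] using AC inv_pow by (intro image_cong) auto
  moreover have "\<not> p dvd (p - 1)" using p_ge3 dvd_imp_le[of p "p - 1"] by auto
  ultimately show ?thesis using block_pow[OF A, of "p - 1"] p_ge3 by simp
qed

lemma sc_eval:
  assumes "A \<in> P" "B \<in> P" "C \<in> P" "z \<in> C"
  shows "struct_const (mu p) P A B C = gr_mult (mu p) (setsum_elt A) (setsum_elt B) z"
proof -
  define F where "F = gr_mult (mu p) (setsum_elt A) (setsum_elt B)"
  have "F \<in> zspan P" unfolding F_def using closed ind_in_span[OF upart] assms by blast
  then obtain c where c: "F = lincomb P c" by (auto simp: zspan_def)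
  have "(THE n. \<exists>c. F = lincomb P c \<and> c C = n) = F z"
  proof (rule the_equality)
    show "\<exists>c. F = lincomb P c \<and> c C = F z"
      using c lincomb_at[OF upart assms(3,4), of c] by auto
  next
    fix n assume "\<exists>c. F = lincomb P c \<and> c C = n"
    then obtain c' where "F = lincomb P c'" "c' C = n" by blast
    then show "n = F z" using lincomb_at[OF upart assms(3,4), of c'] by simp
  qed
  then show ?thesis unfolding struct_const_def F_def by simp
qed

lemma grm_ind:
  assumes "A \<subseteq> CC" "z \<in> CC"
  shows "gr_mult (mu p) (setsum_elt A) (setsum_elt B) z = (\<Sum>y\<in>A. if z / y \<in> B then 1 else 0)"
proof -
  have "gr_mult (mu p) (setsum_elt A) (setsum_elt B) z
      = (\<Sum>y\<in>CC. if y \<in> A then (if z / y \<in> B then 1 else 0) else 0)"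
  proof -
    have "gr_mult (mu p) (setsum_elt A) (setsum_elt B) z = (\<Sum>y\<in>CC. setsum_elt A y * setsum_elt B (z / y))"
      using assms(2) by (simp add: grm)
    also have "\<dots> = (\<Sum>y\<in>CC. if y \<in> A then (if z / y \<in> B then 1 else 0) else 0)"
      by (intro sum.cong refl) (simp add: setsum_elt_def)
    finally show ?thesis .
  qed
  also have "\<dots> = (\<Sum>y\<in>CC \<inter> A. if z / y \<in> B then 1 else 0)"
    using finite_CC by (rule sum.inter_restrict[symmetric])
  also have "CC \<inter> A = A" using assms(1) by blast
  finally show ?thesis .
qed

lemma count_eq:
  assumes y: "y \<in> CC" and BC: "B \<subseteq> CC" "C \<subseteq> CC"
  shows "(\<Sum>z\<in>C. if z / y \<in> B then 1 else 0::int)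
       = (\<Sum>w\<in>inverse ` B. if w / y \<in> inverse ` C then 1 else 0)"
proof -
  have y0: "y \<noteq> 0" using y p_pos by (auto simp: power_0_left)
  have mem: "w \<in> inverse ` D \<longleftrightarrow> inverse w \<in> D" for w :: complex and D
    by (metis image_iff inverse_inverse_eq)
  have IC: "inverse ` B \<subseteq> CC" using BC by (auto simp: power_inverse)
  have "(\<Sum>z\<in>C. if z / y \<in> B then 1 else 0::int) = (\<Sum>z\<in>CC \<inter> C. if z / y \<in> B then 1 else 0)"
    using BC by (simp add: Int_absorb1)
  also have "\<dots> = (\<Sum>z\<in>CC. if z \<in> C then (if z / y \<in> B then 1 else 0) else 0)"
    using finite_CC by (rule sum.inter_restrict)
  also have "\<dots> = (\<Sum>z\<in>CC. if z \<in> C \<and> z / y \<in> B then 1 else 0)"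
    by (intro sum.cong refl) auto
  also have "\<dots> = (\<Sum>w\<in>CC. if inverse w \<in> B \<and> y / w \<in> C then 1 else 0)"
  proof (rule sum.reindex_bij_witness[where i = "\<lambda>w. y / w" and j = "\<lambda>z. y / z"])
    fix w assume "w \<in> CC"
    then show "y / (y / w) = w" "y / w \<in> CC" using y y0 by (auto simp: power_divide)
  next
    fix z assume z: "z \<in> CC"
    then have z0: "z \<noteq> 0" using p_pos by (auto simp: power_0_left)
    show "y / (y / z) = z" "y / z \<in> CC" using y y0 z by (auto simp: power_divide)
    have "inverse (y / z) = z / y" by simp
    then show "(if inverse (y / z) \<in> B \<and> y / (y / z) \<in> C then 1 else 0::int)
        = (if z \<in> C \<and> z / y \<in> B then 1 else 0)" using y0 by auto
  qed
  also have "\<dots> = (\<Sum>w\<in>CC. if w \<in> inverse ` B \<and> w / y \<in> inverse ` C then 1 else 0)"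
    by (intro sum.cong refl) (simp add: mem)
  also have "\<dots> = (\<Sum>w\<in>CC. if w \<in> inverse ` B then (if w / y \<in> inverse ` C then 1 else 0) else 0)"
    by (intro sum.cong refl) auto
  also have "\<dots> = (\<Sum>w\<in>CC \<inter> inverse ` B. if w / y \<in> inverse ` C then 1 else 0)"
    using finite_CC by (rule sum.inter_restrict[symmetric])
  also have "CC \<inter> inverse ` B = inverse ` B" using IC by blast
  finally show ?thesis .
qed

lemma fusion: "fusion_partition (mu p) P"
  unfolding fusion_partition_def
proof (intro conjI ballI)
  show "unital_partition (mu p) P" by (rule unital)
  fix A assume "A \<in> P" then show "inv_set (mu p) A \<in> P" by (rule inv_block)
next
  fix A B C assume ABC: "A \<in> P" "B \<in> P" "C \<in> P"
  have AC: "A \<subseteq> CC" "B \<subseteq> CC" "C \<subseteq> CC" using part_sub[OF upart] ABC by auto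
  have Bi: "inv_set (mu p) B = inverse ` B" and Ci: "inv_set (mu p) C = inverse ` C"
    using inv_set_eq AC by auto
  have BiP: "inverse ` B \<in> P" using inv_block[OF ABC(2)] Bi by simp
  have CiP: "inverse ` C \<in> P" using inv_block[OF ABC(3)] Ci by simp
  have BiC: "inverse ` B \<subseteq> CC" using part_sub[OF upart BiP] .
  have "struct_const (mu p) P A B C * int (card C) = (\<Sum>z\<in>C. struct_const (mu p) P A B C)"
    by (simp add: mult.commute)
  also have "\<dots> = (\<Sum>z\<in>C. \<Sum>y\<in>A. if z / y \<in> B then 1 else 0)"
    using sc_eval[OF ABC] grm_ind[OF AC(1)] AC(3) by (intro sum.cong refl) auto
  also have "\<dots> = (\<Sum>y\<in>A. \<Sum>z\<in>C. if z / y \<in> B then 1 else 0)" by (rule sum.swap)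
  also have "\<dots> = (\<Sum>y\<in>A. \<Sum>w\<in>inverse ` B. if w / y \<in> inverse ` C then 1 else 0)"
  proof (rule sum.cong[OF refl])
    fix y assume "y \<in> A"
    then have "y \<in> CC" using AC by blast
    then show "(\<Sum>z\<in>C. if z / y \<in> B then 1 else (0::int)) = (\<Sum>w\<in>inverse ` B. if w / y \<in> inverse ` C then 1 else 0)"
      by (rule count_eq[OF _ AC(2,3)])
  qed
  also have "\<dots> = (\<Sum>w\<in>inverse ` B. \<Sum>y\<in>A. if w / y \<in> inverse ` C then 1 else 0)" by (rule sum.swap)
  also have "\<dots> = (\<Sum>w\<in>inverse ` B. struct_const (mu p) P A (inverse ` C) (inverse ` B))"
    using sc_eval[OF ABC(1) CiP BiP] grm_ind[OF AC(1)] BiC by (intro sum.cong refl) auto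
  also have "\<dots> = struct_const (mu p) P A (inverse ` C) (inverse ` B) * int (card (inverse ` B))"
    by (simp add: mult.commute)
  finally show "struct_const (mu p) P A B C * int (card C) =
     struct_const (mu p) P A (inv_set (mu p) C) (inv_set (mu p) B) * int (card (inv_set (mu p) B))"
    unfolding Bi Ci .
qed

end


lemma grm_inv:
  assumes b: "\<not> p dvd b" and f: "\<forall>z\<in>CC. f (z ^ b) = f z" and g: "\<forall>z\<in>CC. g (z ^ b) = g z"
    and w: "w \<in> CC"
  shows "gr_mult (mu p) f g (w ^ b) = gr_mult (mu p) f g w"
proof -
  have w0: "w \<noteq> 0" using w p_pos by (auto simp: power_0_left)
  have "gr_mult (mu p) f g (w ^ b) = (\<Sum>y\<in>CC. f y * g (w ^ b / y))"
    using pow_in w by (simp add: grm)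
  also have "\<dots> = (\<Sum>y\<in>CC. f (y ^ b) * g (w ^ b / y ^ b))"
    using sum.reindex_bij_betw[OF pow_bij[OF b], of "\<lambda>y. f y * g (w ^ b / y)"] by simp
  also have "\<dots> = (\<Sum>y\<in>CC. f y * g (w / y))"
  proof (rule sum.cong[OF refl])
    fix y assume y: "y \<in> CC"
    have "w / y \<in> CC" using y w by (simp add: power_divide)
    then have "g ((w / y) ^ b) = g (w / y)" using g by blast
    then show "f (y ^ b) * g (w ^ b / y ^ b) = f y * g (w / y)" using f y by (simp add: power_divide)
  qed
  also have "\<dots> = gr_mult (mu p) f g w" using w by (simp add: grm)
  finally show ?thesis .
qed

lemma same_one:
  assumes "is_partition_with_unit (mu p) P"
  shows "(\<exists>A\<in>P. 1 \<in> A \<and> w \<in> A) \<longleftrightarrow> w = 1"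
  using part_one[OF assms] part_unique[OF assms] by blast

lemma part_eq:
  assumes P: "is_partition_with_unit (mu p) P" and Q: "is_partition_with_unit (mu p) Q"
    and R: "\<And>z w. z \<in> CC \<Longrightarrow> w \<in> CC \<Longrightarrow> (\<exists>A\<in>P. z \<in> A \<and> w \<in> A) \<longleftrightarrow> (\<exists>B\<in>Q. z \<in> B \<and> w \<in> B)"
  shows "P = Q"
proof -
  have sub: "P' \<subseteq> Q'" if P': "is_partition_with_unit (mu p) P'" and Q': "is_partition_with_unit (mu p) Q'"
    and R': "\<And>z w. z \<in> CC \<Longrightarrow> w \<in> CC \<Longrightarrow> (\<exists>A\<in>P'. z \<in> A \<and> w \<in> A) \<longleftrightarrow> (\<exists>B\<in>Q'. z \<in> B \<and> w \<in> B)"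
    for P' Q'
  proof
    fix A assume A: "A \<in> P'"
    obtain z where z: "z \<in> A" using part_ne[OF P' A] by blast
    have zC: "z \<in> CC" using part_sub[OF P' A] z by blast
    obtain B where B: "B \<in> Q'" "z \<in> B" using part_cover[OF Q' zC] by blast
    have "A = B"
    proof
      show "A \<subseteq> B"
      proof
        fix w assume w: "w \<in> A"
        have wC: "w \<in> CC" using part_sub[OF P' A] w by blast
        obtain B' where "B' \<in> Q'" "z \<in> B'" "w \<in> B'" using R'[OF zC wC] A z w by blast
        then show "w \<in> B" using part_unique[OF Q' B(1)] B by blast
      qed
      show "B \<subseteq> A"
      proof
        fix w assume w: "w \<in> B"
        have wC: "w \<in> CC" using part_sub[OF Q' B(1)] w by blast
        obtain A' where "A' \<in> P'" "z \<in> A'" "w \<in> A'" using R'[OF zC wC] B w by blast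
        then show "w \<in> A" using part_unique[OF P' A] z by blast
      qed
    qed
    then show "A \<in> Q'" using B by simp
  qed
  show ?thesis using sub[OF P Q R] sub[OF Q P] R by blast
qed

end

locale mupa = mup +
  fixes \<alpha> :: int
  assumes gen_alpha: "unit_group_generator p \<alpha>"
begin

definition a :: nat where "a = nat (\<alpha> mod int p)"
definition g :: "nat \<Rightarrow> complex" where "g e = x ^ (a ^ e)"

lemma a_ndvd: "\<not> p dvd a"
proof
  assume "p dvd a"
  have cop: "coprime \<alpha> (int p)" using gen_alpha by (simp add: unit_group_generator_def)
  have "0 \<le> \<alpha> mod int p" "\<alpha> mod int p < int p" using p_pos by auto
  then have "int a = \<alpha> mod int p" unfolding a_def by simp
  moreover have "a < p" using \<open>\<alpha> mod int p < int p\<close> \<open>int a = \<alpha> mod int p\<close> by linarith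
  ultimately have "a = 0" using \<open>p dvd a\<close> by (metis dvd_imp_le not_less not_gr0)
  then have "int p dvd \<alpha>" using \<open>int a = \<alpha> mod int p\<close> by (simp add: dvd_eq_mod_eq_0)
  then have "int p dvd 1" using cop by (metis coprime_common_divisor dvd_refl)
  then show False using p_ge3 by simp
qed

lemma alpha_pow: "nat ((\<alpha> ^ n) mod int p) = a ^ n mod p"
proof -
  have "int a = \<alpha> mod int p" unfolding a_def using p_pos by simp
  then have "int (a ^ n mod p) = (\<alpha> mod int p) ^ n mod int p" by (simp add: of_nat_mod)
  also have "\<dots> = \<alpha> ^ n mod int p" by (simp add: power_mod)
  finally show ?thesis by simp
qed

lemma g_in: "g e \<in> CC" unfolding g_def using x_pow_in by simp

lemma g_ne1: "g e \<noteq> 1"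
  unfolding g_def using x_pow_1_iff not_dvd_pow[OF a_ndvd] by simp

lemma g_mod: "g e = g (e mod (p - 1))"
proof -
  have "[a ^ (p - 1) = 1] (mod p)" using fermat_theorem prime_p a_ndvd by blast
  then have "[(a ^ (p - 1)) ^ (e div (p - 1)) * a ^ (e mod (p - 1)) = 1 ^ (e div (p - 1)) * a ^ (e mod (p - 1))] (mod p)"
    by (intro cong_mult cong_pow cong_refl)
  moreover have "(a ^ (p - 1)) ^ (e div (p - 1)) * a ^ (e mod (p - 1)) = a ^ e"
    by (metis power_mult power_add div_mult_mod_eq mult.commute)
  ultimately have "a ^ e mod p = a ^ (e mod (p - 1)) mod p" by (simp add: cong_def)
  then show ?thesis unfolding g_def x_pow_eq_iff .
qed

lemma g_cover: "z \<in> CC \<Longrightarrow> z \<noteq> 1 \<Longrightarrow> \<exists>e. z = g e"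
proof -
  assume z: "z \<in> CC" "z \<noteq> 1"
  obtain n where n: "z = x ^ n" using z gen by auto
  have nm: "n mod p \<noteq> 0"
  proof
    assume "n mod p = 0"
    then have "x ^ n = x ^ 0" using x_pow_eq_iff[of n 0] by simp
    then show False using n z by simp
  qed
  have cop: "coprime (int (n mod p)) (int p)"
  proof -
    have "\<not> p dvd (n mod p)" using nm p_pos by (metis dvd_imp_le mod_less_divisor not_less neq0_conv)
    then have "coprime p (n mod p)" using prime_imp_coprime prime_p by blast
    then show ?thesis by (simp add: coprime_commute)
  qed
  then obtain i where i: "[\<alpha> ^ i = int (n mod p)] (mod int p)"
    using gen_alpha unfolding unit_group_generator_def by blast
  then have "\<alpha> ^ i mod int p = int (n mod p)" using p_pos by (simp add: cong_def of_nat_mod)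
  then have "a ^ i mod p = n mod p" using alpha_pow[of i] by simp
  then have "g i = z" unfolding g_def n x_pow_eq_iff by simp
  then show ?thesis by metis
qed

lemma g_image: "g ` {..<p - 1} = CC - {1}"
proof
  show "g ` {..<p - 1} \<subseteq> CC - {1}" using g_in g_ne1 by auto
  show "CC - {1} \<subseteq> g ` {..<p - 1}"
  proof
    fix z assume "z \<in> CC - {1}"
    then obtain e where "z = g e" using g_cover by blast
    then have "z = g (e mod (p - 1))" using g_mod by simp
    moreover have "e mod (p - 1) < p - 1" using p_ge3 by simp
    ultimately show "z \<in> g ` {..<p - 1}" by blast
  qed
qed

lemma g_inj: "inj_on g {..<p - 1}"
proof (rule eq_card_imp_inj_on)
  show "finite {..<p - 1}" by simp
  have "card (CC - {1}) = p - 1" using card_CC finite_CC x_root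
    by (simp add: card_Diff_singleton)
  then show "card (g ` {..<p - 1}) = card {..<p - 1}" using g_image by simp
qed

lemma g_eq_iff: "g e = g f \<longleftrightarrow> e mod (p - 1) = f mod (p - 1)"
proof
  assume "g e = g f"
  then have "g (e mod (p - 1)) = g (f mod (p - 1))" using g_mod by metis
  moreover have "e mod (p - 1) < p - 1" "f mod (p - 1) < p - 1" using p_ge3 by auto
  ultimately show "e mod (p - 1) = f mod (p - 1)" using g_inj by (auto simp: inj_on_def)
next
  assume "e mod (p - 1) = f mod (p - 1)"
  then show "g e = g f" using g_mod by metis
qed

lemma g_pow: "g e ^ (a ^ f) = g (e + f)"
  unfolding g_def by (simp add: power_mult power_add)

lemma g0: "g 0 = x" unfolding g_def by simp


definition AP :: "nat \<Rightarrow> nat \<Rightarrow> complex set" where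
  "AP u i = {g (i + u * j) | j. j \<le> (p - 1) div u - 1}"

lemma Apart_eq: "Apart p x \<alpha> u i = AP u i"
proof -
  have "x [^]\<^bsub>mu p\<^esub> (\<alpha> ^ i * (\<alpha> ^ u) ^ j) = g (i + u * j)" for j
  proof -
    have "\<alpha> ^ i * (\<alpha> ^ u) ^ j = \<alpha> ^ (i + u * j)" by (simp add: power_add power_mult)
    then have "x [^]\<^bsub>mu p\<^esub> (\<alpha> ^ i * (\<alpha> ^ u) ^ j) = x ^ (a ^ (i + u * j) mod p)"
      using int_pow_x alpha_pow by simp
    also have "\<dots> = g (i + u * j)" unfolding g_def x_pow_eq_iff by simp
    finally show ?thesis .
  qed
  then show ?thesis unfolding Apart_def AP_def Let_def by simp
qed

lemma Ppart_eq: "Ppart p x \<alpha> u = insert {1} {AP u i | i. i < u}"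
  unfolding Ppart_def Apart_eq ..

lemma shift_arith:
  fixes e f u v :: nat
  assumes "e mod u = f mod u" "p - 1 = u * v" "v \<ge> 1"
  shows "e + u * (f div u + (v - 1) * (e div u)) = f + (p - 1) * (e div u)"
proof -
  obtain w where w: "v = Suc w" using assms(3) by (cases v) auto
  define E F r where "E = e div u" and "F = f div u" and "r = e mod u"
  have e: "e = u * E + r" unfolding E_def r_def by simp
  have f: "f = u * F + r" unfolding F_def r_def using assms(1) by simp
  have "u * E + r + u * (F + (Suc w - 1) * E) = u * F + r + u * Suc w * E"
    by (simp add: algebra_simps)
  then show ?thesis unfolding assms(2) w E_def[symmetric] F_def[symmetric] using e f by simp
qed

lemma g_shift:
  assumes u: "u > 0" "u dvd p - 1" and ef: "e mod u = f mod u"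
  shows "\<exists>k. g (e + u * k) = g f"
proof -
  obtain v where v: "p - 1 = u * v" using u(2) by blast
  have "v \<ge> 1" using v p_ge3 by (cases v) auto
  have "(f + (p - 1) * (e div u)) mod (p - 1) = f mod (p - 1)" by simp
  then have "g (e + u * (f div u + (v - 1) * (e div u))) = g f"
    unfolding g_eq_iff shift_arith[OF ef v \<open>v \<ge> 1\<close>] .
  then show ?thesis by blast
qed

lemma AP_mem:
  assumes u: "u > 0" "u dvd p - 1" and i: "i < u"
  shows "g f \<in> AP u i \<longleftrightarrow> f mod u = i"
proof
  assume "g f \<in> AP u i"
  then obtain j where "g f = g (i + u * j)" unfolding AP_def by blast
  then have "f mod (p - 1) = (i + u * j) mod (p - 1)" using g_eq_iff by simp
  then have "f mod (p - 1) mod u = (i + u * j) mod (p - 1) mod u" by simp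
  then have "f mod u = (i + u * j) mod u" using u(2) by (simp add: mod_mod_cancel)
  then show "f mod u = i" using i by simp
next
  assume fi: "f mod u = i"
  obtain v where v: "p - 1 = u * v" using u(2) by blast
  define t where "t = f mod (p - 1)"
  have "t mod u = i" unfolding t_def using u(2) fi by (simp add: mod_mod_cancel)
  then have t: "t = i + u * (t div u)" by (metis add.commute div_mult_mod_eq mult.commute)
  have "t < p - 1" unfolding t_def using p_ge3 by simp
  then have "u * (t div u) < u * v" using t v by linarith
  then have "t div u < v" by simp
  then have "t div u \<le> (p - 1) div u - 1" using v u by simp
  moreover have "g f = g (i + u * (t div u))"
    using t g_mod[of f] unfolding t_def[symmetric] by simp
  ultimately show "g f \<in> AP u i" unfolding AP_def by blast
qed

lemma AP_sub: "AP u i \<subseteq> CC - {1}" unfolding AP_def using g_in g_ne1 by auto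

lemma Q_part:
  assumes u: "u > 0" "u dvd p - 1"
  shows "is_partition_with_unit (mu p) (Ppart p x \<alpha> u)"
  unfolding is_partition_with_unit_def Ppart_eq
proof (intro conjI ballI impI)
  show "{\<one>\<^bsub>mu p\<^esub>} \<in> insert {1} {AP u i |i. i < u}" by simp
next
  fix A assume "A \<in> insert {1} {AP u i |i. i < u}"
  then show "A \<noteq> {}"
  proof
    assume "A \<in> {AP u i |i. i < u}"
    then obtain i where "A = AP u i" by blast
    then have "g i \<in> A" unfolding AP_def by force
    then show "A \<noteq> {}" by blast
  qed simp
next
  fix A assume "A \<in> insert {1} {AP u i |i. i < u}"
  then show "A \<subseteq> carrier (mu p)" using AP_sub by auto
next
  fix A B assume A: "A \<in> insert {1} {AP u i |i. i < u}" and B: "B \<in> insert {1} {AP u i |i. i < u}"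
    and AB: "A \<noteq> B"
  show "A \<inter> B = {}"
  proof (rule ccontr)
    assume "A \<inter> B \<noteq> {}"
    then obtain z where z: "z \<in> A" "z \<in> B" by blast
    show False
    proof (cases "z = 1")
      case True
      then have "A = {1}" "B = {1}" using A B z AP_sub by auto
      then show False using AB by simp
    next
      case False
      then obtain i k where ik: "A = AP u i" "B = AP u k" "i < u" "k < u" using A B z by auto
      then obtain f where f: "z = g f" using z AP_def by auto
      have "f mod u = i" "f mod u = k" using AP_mem[OF u] ik z f by auto
      then show False using AB ik by simp
    qed
  qed
next
  show "\<Union> (insert {1} {AP u i |i. i < u}) = carrier (mu p)"
  proof
    show "\<Union> (insert {1} {AP u i |i. i < u}) \<subseteq> carrier (mu p)" using AP_sub by auto
    show "carrier (mu p) \<subseteq> \<Union> (insert {1} {AP u i |i. i < u})"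
    proof
      fix z assume z: "z \<in> carrier (mu p)"
      show "z \<in> \<Union> (insert {1} {AP u i |i. i < u})"
      proof (cases "z = 1")
        case False
        then obtain f where f: "z = g f" using g_cover z by auto
        have "z \<in> AP u (f mod u)" using AP_mem[OF u, of "f mod u" f] u f by simp
        moreover have "f mod u < u" using u by simp
        ultimately show ?thesis by blast
      qed simp
    qed
  qed
qed

lemma Q_same:
  assumes u: "u > 0" "u dvd p - 1"
  shows "(\<exists>B\<in>Ppart p x \<alpha> u. g e \<in> B \<and> g f \<in> B) \<longleftrightarrow> e mod u = f mod u"
proof
  assume "\<exists>B\<in>Ppart p x \<alpha> u. g e \<in> B \<and> g f \<in> B"
  then obtain B where B: "B \<in> Ppart p x \<alpha> u" "g e \<in> B" "g f \<in> B" by blast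
  have "B \<noteq> {1}" using B g_ne1 by auto
  then obtain i where "B = AP u i" "i < u" using B(1) unfolding Ppart_eq by auto
  then show "e mod u = f mod u" using AP_mem[OF u] B by simp
next
  assume "e mod u = f mod u"
  then have "g e \<in> AP u (e mod u)" "g f \<in> AP u (e mod u)" using AP_mem[OF u] u by simp_all
  moreover have "AP u (e mod u) \<in> Ppart p x \<alpha> u" unfolding Ppart_eq using u by auto
  ultimately show "\<exists>B\<in>Ppart p x \<alpha> u. g e \<in> B \<and> g f \<in> B" by blast
qed


lemma g_iter: "(\<forall>z\<in>CC. f (z ^ (a ^ u)) = f z) \<Longrightarrow> f (g (e + u * k)) = f (g e)"
proof (induction k)
  case (Suc k)
  have "g (e + u * Suc k) = g (e + u * k) ^ (a ^ u)" by (simp add: g_pow algebra_simps)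
  then show ?case using Suc g_in by simp
qed simp

lemma Q_span_iff:
  assumes u: "u > 0" "u dvd p - 1"
  shows "f \<in> zspan (Ppart p x \<alpha> u) \<longleftrightarrow> (\<forall>z. z \<notin> CC \<longrightarrow> f z = 0) \<and> (\<forall>z\<in>CC. f (z ^ (a ^ u)) = f z)"
  unfolding span_iff[OF Q_part[OF u]]
proof (intro conj_cong refl iffI ballI)
  fix z assume H: "\<forall>A\<in>Ppart p x \<alpha> u. \<forall>z\<in>A. \<forall>w\<in>A. f z = f w" and z: "z \<in> CC"
  show "f (z ^ (a ^ u)) = f z"
  proof (cases "z = 1")
    case False
    then obtain e where e: "z = g e" using g_cover z by blast
    have "z ^ (a ^ u) = g (e + u)" unfolding e g_pow ..
    moreover have "(\<exists>B\<in>Ppart p x \<alpha> u. g (e + u) \<in> B \<and> g e \<in> B)" using Q_same[OF u] by simp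
    ultimately show ?thesis using H e by metis
  qed simp
next
  fix A z w
  assume H: "\<forall>z\<in>CC. f (z ^ (a ^ u)) = f z" and A: "A \<in> Ppart p x \<alpha> u" and zw: "z \<in> A" "w \<in> A"
  show "f z = f w"
  proof (cases "A = {1}")
    case True then show ?thesis using zw by simp
  next
    case False
    then obtain i where i: "A = AP u i" "i < u" using A unfolding Ppart_eq by auto
    obtain e f' where ef: "z = g e" "w = g f'" using zw i unfolding AP_def by auto
    have "e mod u = f' mod u" using AP_mem[OF u i(2)] zw i ef by simp
    then obtain k where "g (e + u * k) = g f'" using g_shift[OF u] by blast
    then show ?thesis using g_iter[OF H, of e k] ef by simp
  qed
qed

theorem part1:
  assumes u: "u > 0" "u dvd p - 1"
  shows "unital_partition (mu p) (Ppart p x \<alpha> u)"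
  unfolding unital_partition_def
proof (intro conjI ballI)
  show "is_partition_with_unit (mu p) (Ppart p x \<alpha> u)" by (rule Q_part[OF u])
  fix f h assume f: "f \<in> zspan (Ppart p x \<alpha> u)" and h: "h \<in> zspan (Ppart p x \<alpha> u)"
  have b: "\<not> p dvd a ^ u" using not_dvd_pow[OF a_ndvd] .
  show "gr_mult (mu p) f h \<in> zspan (Ppart p x \<alpha> u)"
    unfolding Q_span_iff[OF u]
  proof (intro conjI allI impI ballI)
    fix z assume "z \<notin> CC" then show "gr_mult (mu p) f h z = 0" by (simp add: grm)
  next
    fix z assume "z \<in> CC"
    then show "gr_mult (mu p) f h (z ^ (a ^ u)) = gr_mult (mu p) f h z"
      using grm_inv[OF b] f h unfolding Q_span_iff[OF u] by blast
  qed
qed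

context
  fixes P assumes unital: "unital_partition (mu p) P"
begin

lemma upart': "is_partition_with_unit (mu p) P" using unital by (simp add: unital_partition_def)

lemma a_pos: "a > 0" using a_ndvd by (cases a) auto

theorem part2: "\<exists>u. u dvd p - 1 \<and> P = Ppart p x \<alpha> u"
proof -
  have xC: "x \<in> CC" using x_root by simp
  obtain T1 where T1: "T1 \<in> P" "x \<in> T1" using part_cover[OF upart' xC] by blast
  define H where "H e \<longleftrightarrow> g e \<in> T1" for e
  have H0: "H 0" unfolding H_def g0 using T1 by simp
  define Bl where "Bl e = (\<lambda>z. z ^ (a ^ e)) ` T1" for e
  have BlP: "Bl e \<in> P" for e
    unfolding Bl_def using block_pow[OF unital T1(1) not_dvd_pow[OF a_ndvd]] a_pos by simp
  have gBl: "g e \<in> Bl e" for e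
    unfolding Bl_def using T1(2) g_pow[of 0 e] g0 by force
  have Hadd: "H (e + f)" if "H e" "H f" for e f
  proof -
    have "Bl f = T1" using part_unique[OF upart' BlP T1(1) gBl] \<open>H f\<close> unfolding H_def by blast
    moreover have "g (e + f) \<in> Bl f" unfolding Bl_def using \<open>H e\<close> g_pow[of e f] unfolding H_def by force
    ultimately show ?thesis unfolding H_def by simp
  qed
  have Hmod: "H e \<longleftrightarrow> H (e mod (p - 1))" for e unfolding H_def using g_mod by metis
  have Hp: "H (p - 1)" using Hmod[of "p - 1"] H0 by simp
  define u where "u = (LEAST e. 0 < e \<and> H e)"
  have p1: "0 < p - 1" using p_ge3 by simp
  have uH: "0 < u \<and> H u" unfolding u_def using LeastI[of "\<lambda>e. 0 < e \<and> H e" "p - 1"] p1 Hp by blast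
  have ule: "u \<le> p - 1" unfolding u_def using Least_le[of "\<lambda>e. 0 < e \<and> H e" "p - 1"] p1 Hp by blast
  have Hmul: "H (u * k)" for k
  proof (induction k)
    case 0 then show ?case using H0 by simp
  next
    case (Suc k)
    have "u * Suc k = u + u * k" by simp
    then show ?case using Hadd[OF _ Suc] uH by simp
  qed
  have Hiff: "H e \<longleftrightarrow> u dvd e" for e
  proof
    assume He: "H e"
    define k t where "k = e div u" and "t = e mod u"
    have "H (e + (p - 2) * (u * k))" using Hadd[OF He, of "(p - 2) * (u * k)"] Hmul[of "(p - 2) * k"]
      by (simp add: algebra_simps)
    moreover have "e + (p - 2) * (u * k) = t + (p - 1) * (u * k)"
    proof -
      have "e = u * k + t" unfolding k_def t_def by simp
      moreover have "p - 1 = Suc (p - 2)" using p_ge3 by simp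
      ultimately show ?thesis by (simp add: algebra_simps)
    qed
    ultimately have "H (t + (p - 1) * (u * k))" by simp
    then have "H ((t + (p - 1) * (u * k)) mod (p - 1))" using Hmod by blast
    moreover have "t < p - 1" using uH ule unfolding t_def by (meson mod_less_divisor less_le_trans)
    ultimately have Ht: "H t" by simp
    have "t < u" unfolding t_def using uH by simp
    then have "\<not> (0 < t \<and> H t)" using not_less_Least[of t "\<lambda>e. 0 < e \<and> H e"] unfolding u_def by blast
    then have "t = 0" using Ht by simp
    then show "u dvd e" unfolding t_def by (simp add: mod_eq_0_iff_dvd)
  next
    assume "u dvd e" then obtain k where "e = u * k" by blast
    then show "H e" using Hmul by simp
  qed
  have udvd: "u dvd p - 1" using Hiff Hp by blast
  have u0: "u > 0" using uH by blast
  have one_notin: "1 \<notin> T1"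
  proof
    assume "1 \<in> T1"
    then have "T1 = {1}" using part_unique[OF upart' T1(1) part_one[OF upart']] by blast
    then show False using T1(2) x_ne1 by simp
  qed
  have P_same: "(\<exists>A\<in>P. g e \<in> A \<and> g f \<in> A) \<longleftrightarrow> e mod u = f mod u" for e f
  proof
    assume "\<exists>A\<in>P. g e \<in> A \<and> g f \<in> A"
    then obtain A where A: "A \<in> P" "g e \<in> A" "g f \<in> A" by blast
    have "A = Bl e" using part_unique[OF upart' A(1) BlP A(2) gBl] .
    then obtain y where y: "y \<in> T1" "g f = y ^ (a ^ e)" using A(3) unfolding Bl_def by blast
    have "y \<in> CC" using part_sub[OF upart' T1(1)] y by blast
    moreover have "y \<noteq> 1" using y one_notin by blast
    ultimately obtain k where k: "y = g k" using g_cover by blast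
    have "u dvd k" using Hiff[of k] y k unfolding H_def by simp
    have "g f = g (k + e)" using y k g_pow by simp
    then have "f mod (p - 1) = (k + e) mod (p - 1)" using g_eq_iff by simp
    then have "f mod (p - 1) mod u = (k + e) mod (p - 1) mod u" by simp
    then have "f mod u = (k + e) mod u" using udvd by (simp add: mod_mod_cancel)
    then show "e mod u = f mod u" using \<open>u dvd k\<close> by (auto simp: mod_add_left_eq[symmetric])
  next
    assume "e mod u = f mod u"
    then obtain k where k: "g (e + u * k) = g f" using g_shift[OF u0 udvd] by blast
    have "g (u * k) \<in> T1" using Hmul unfolding H_def by simp
    moreover have "g (u * k) ^ (a ^ e) = g f" using g_pow[of "u * k" e] k by (simp add: add.commute)
    ultimately have "g f \<in> Bl e" unfolding Bl_def by force
    then show "\<exists>A\<in>P. g e \<in> A \<and> g f \<in> A" using BlP gBl by blast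
  qed
  have "P = Ppart p x \<alpha> u"
  proof (rule part_eq[OF upart' Q_part[OF u0 udvd]])
    fix z w assume z: "z \<in> CC" and w: "w \<in> CC"
    show "(\<exists>A\<in>P. z \<in> A \<and> w \<in> A) \<longleftrightarrow> (\<exists>B\<in>Ppart p x \<alpha> u. z \<in> B \<and> w \<in> B)"
    proof (cases "z = 1 \<or> w = 1")
      case True
      then show ?thesis
        using same_one[OF upart', of w] same_one[OF Q_part[OF u0 udvd], of w]
          same_one[OF upart', of z] same_one[OF Q_part[OF u0 udvd], of z] by blast
    next
      case False
      then obtain e f where "z = g e" "w = g f" using g_cover z w by metis
      then show ?thesis using P_same Q_same[OF u0 udvd] by simp
    qed
  qed
  then show ?thesis using udvd by blast
qed

end

end


theorem theorem3p10:
  fixes p :: nat and x :: complex and \<alpha> :: int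
  assumes "Factorial_Ring.prime p" and "odd p"
    and "x \<in> carrier (mu p)"
    and "carrier (mu p) = {x [^]\<^bsub>mu p\<^esub> (n::nat) | n. True}"
    and "unit_group_generator p \<alpha>"
  shows "(\<forall>u. u dvd p - 1 \<longrightarrow> unital_partition (mu p) (Ppart p x \<alpha> u))
       \<and> (\<forall>P. unital_partition (mu p) P \<longrightarrow> (\<exists>u. u dvd p - 1 \<and> P = Ppart p x \<alpha> u))
       \<and> (\<forall>P. unital_partition (mu p) P \<longrightarrow> fusion_partition (mu p) P)"
proof -
  have xr: "x ^ p = 1" using assms(3) by simp
  have gen: "{z. z ^ p = 1} = range (\<lambda>n. x ^ n)" using assms(4) by auto
  interpret mupa p x \<alpha>
    by unfold_locales (use assms xr gen in auto)
  show ?thesis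
  proof (intro conjI allI impI)
    fix u assume u: "u dvd p - 1"
    have "u > 0" using u p_ge3 by (cases "u = 0") auto
    then show "unital_partition (mu p) (Ppart p x \<alpha> u)" using part1 u by blast
  next
    fix P assume "unital_partition (mu p) P"
    then show "\<exists>u. u dvd p - 1 \<and> P = Ppart p x \<alpha> u" by (rule part2)
  next
    fix P assume "unital_partition (mu p) P"
    then show "fusion_partition (mu p) P" by (rule fusion)
  qed
qed

end
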